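(* Let $n\ge3$ be odd and write $c_j=\cos(2\pi j/n)$. Then $$Su_2:=\frac32\sum_{j=0}^{\lfloor n/4\rfloor}\ \sum_{k=\lceil n/4\rceil}^{(n-1)/2}\frac{1}{|c_j-c_k+1|}\ \le\ \frac{3}{32}\,n^2.$$
   Context: No additional context beyond the notation $c_j=\cos(2\pi j/n)$. *)

theory Defs
  imports Complex_Main
begin

definition cc :: "nat \<Rightarrow> nat \<Rightarrow> real" where
  "cc n j = cos (2 * pi * real j / real n)"

end

theory Submission
  imports Defs
begin

lemma cc_nonneg:
  assumes "n > 0" "4 * j \<le> n"
  shows "cc n j \<ge> 0"
proof -
  have e: "2 * pi * real j / real n = pi / 2 * (real (4*j) / real n)" by simp
  have "real (4*j) / real n \<le> 1" using assms by simp
  hence "pi / 2 * (real (4*j) / real n) \<le> pi / 2 * 1"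
    by (intro mult_left_mono) (use pi_gt_zero in auto)
  hence "2 * pi * real j / real n \<le> pi / 2" using e by (metis mult_1_right)
  moreover have "0 \<le> 2 * pi * real j / real n" by simp
  ultimately show ?thesis unfolding cc_def by (intro cos_ge_zero) (use pi_gt_zero in linarith)+
qed

lemma cc_nonpos:
  assumes "n > 0" "n \<le> 4 * k" "2 * k \<le> n"
  shows "cc n k \<le> 0"
proof -
  let ?x = "2 * pi * real k / real n"
  have e1: "?x = pi / 2 * (real (4*k) / real n)" by simp
  have e2: "?x = pi * (real (2*k) / real n)" by simp
  have "1 \<le> real (4*k) / real n" using assms by simp
  hence "pi / 2 * 1 \<le> pi / 2 * (real (4*k) / real n)"
    by (intro mult_left_mono) (use pi_gt_zero in auto)
  hence "pi / 2 \<le> ?x" using e1 by (metis mult_1_right)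
  moreover have "real (2*k) / real n \<le> 1" using assms by simp
  hence "pi * (real (2*k) / real n) \<le> pi * 1"
    by (intro mult_left_mono) (use pi_gt_zero in auto)
  hence "?x \<le> pi" using e2 by (metis mult_1_right)
  ultimately have "cos ?x \<le> cos (pi/2)"
    using cos_mono_le_eq[of ?x "pi/2"] pi_gt_zero by auto
  thus ?thesis unfolding cc_def by simp
qed

theorem mainTheorem5:
  fixes n :: nat
  assumes "n \<ge> 3" and "odd n"
  shows "3 / 2 * (\<Sum>j = 0..nat \<lfloor>real n / 4\<rfloor>. \<Sum>k = nat \<lceil>real n / 4\<rceil>..(n - 1) div 2.
            1 / \<bar>cc n j - cc n k + 1\<bar>) \<le> 3 / 32 * (real n)^2"
proof -
  define a where "a = nat \<lfloor>real n / 4\<rfloor>"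
  define b where "b = nat \<lceil>real n / 4\<rceil>"
  define h where "h = (n - 1) div 2"
  have n0: "n > 0" using assms by simp
  have ha: "4 * a \<le> n"
  proof -
    have "real_of_int \<lfloor>real n / 4\<rfloor> \<le> real n / 4" by (rule of_int_floor_le)
    moreover have "\<lfloor>real n / 4\<rfloor> \<ge> 0" by simp
    ultimately have "4 * real a \<le> real n" unfolding a_def by simp
    thus ?thesis by linarith
  qed
  have hb: "n \<le> 4 * b"
  proof -
    have c1: "real n / 4 \<le> real_of_int \<lceil>real n / 4\<rceil>" by (rule le_of_int_ceiling)
    moreover have "\<lceil>real n / 4\<rceil> \<ge> 0" by simp
    ultimately have "real b = real_of_int \<lceil>real n / 4\<rceil>" unfolding b_def by simp
    hence "real n \<le> 4 * real b" using c1 by linarith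
    thus ?thesis by linarith
  qed
  have hh: "2 * h \<le> n" unfolding h_def by simp
  define f :: "nat \<Rightarrow> nat \<Rightarrow> real" where "f j k = (if j = 0 then 1/2 else 1)" for j k
  have tm: "1 / \<bar>cc n j - cc n k + 1\<bar> \<le> f j k" if "j \<in> {0..a}" "k \<in> {b..h}" for j k
  proof -
    have x: "cc n j \<ge> 0" using cc_nonneg[OF n0, of j] that ha by auto
    have y: "cc n k \<le> 0" using cc_nonpos[OF n0, of k] that hb hh by auto
    show ?thesis
    proof (cases "j = 0")
      case True
      have "cc n 0 = 1" unfolding cc_def by simp
      hence "cc n j - cc n k + 1 \<ge> 2" using True y by simp
      thus ?thesis using True unfolding f_def by simp
    next
      case False
      have "cc n j - cc n k + 1 \<ge> 1" using x y by simp
      thus ?thesis using False unfolding f_def by simp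
    qed
  qed
  have S: "(\<Sum>j = 0..a. \<Sum>k = b..h. 1 / \<bar>cc n j - cc n k + 1\<bar>) \<le> (\<Sum>j = 0..a. \<Sum>k = b..h. f j k)"
    by (intro sum_mono) (use tm in auto)
  have F: "(\<Sum>j = 0..a. \<Sum>k = b..h. f j k) = (real (card {b..h})) / 2 + real a * real (card {b..h})"
  proof -
    have "(\<Sum>j = 0..a. \<Sum>k = b..h. f j k) = (\<Sum>k = b..h. f 0 k) + (\<Sum>j = Suc 0..a. \<Sum>k = b..h. f j k)"
      by (simp add: sum.atLeast_Suc_atMost)
    also have "(\<Sum>j = Suc 0..a. \<Sum>k = b..h. f j k) = (\<Sum>j = Suc 0..a. real (card {b..h}))"
      by (intro sum.cong) (auto simp: f_def)
    finally show ?thesis by (simp add: f_def)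
  qed
  define q where "q = n div 4"
  have r: "n mod 4 = 1 \<or> n mod 4 = 3" using assms(2) by presburger
  have nq: "n = 4*q + n mod 4" unfolding q_def by simp
  have aq: "a = q"
  proof -
    have "\<lfloor>real n / 4\<rfloor> = int q"
      by (rule floor_unique) (use nq r in \<open>auto simp: field_simps\<close>)
    thus ?thesis unfolding a_def by simp
  qed
  have bq: "b = q + 1"
  proof -
    have "\<lceil>real n / 4\<rceil> = int q + 1"
      by (rule ceiling_unique) (use nq r in \<open>auto simp: field_simps\<close>)
    thus ?thesis unfolding b_def by simp
  qed
  have "(\<Sum>j = 0..a. \<Sum>k = b..h. f j k) \<le> real n ^ 2 / 16"
    using r
  proof
    assume r1: "n mod 4 = 1"
    have "h = 2*q" unfolding h_def using nq r1 by presburger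
    hence c: "card {b..h} = q" using bq by simp
    have "real n = 4 * real q + 1" using nq r1 by simp
    thus ?thesis unfolding F unfolding c aq by (simp add: power2_eq_square algebra_simps)
  next
    assume r1: "n mod 4 = 3"
    have "h = 2*q+1" unfolding h_def using nq r1 by presburger
    hence c: "card {b..h} = q+1" using bq by simp
    have "real n = 4 * real q + 3" using nq r1 by simp
    thus ?thesis unfolding F unfolding c aq by (simp add: power2_eq_square algebra_simps)
  qed
  with S have "(\<Sum>j = 0..a. \<Sum>k = b..h. 1 / \<bar>cc n j - cc n k + 1\<bar>) \<le> real n ^ 2 / 16"
    by linarith
  thus ?thesis unfolding a_def b_def h_def by simp
qed

end
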